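(* Let $A\in\{\mathbb Z,\mathbb R\}$ and let $X\subset\mathbb R^d$ be a full-dimensional polytope. Then every convex body $K\subset\mathbb R^d$ which is $A$-$X$-free and inclusion-maximal among $A$-$X$-free convex bodies is a polytope.
   Context: A convex body in $\mathbb R^d$ is a nonempty compact convex subset of $\mathbb R^d$. An $A$-unimodular transformation is a map $T:\mathbb R^d\to\mathbb R^d$, $T(x)=Mx+b$ with $M\in \mathrm{GL}_d(\mathbb Z)$ and $b\in A^d$; an $A$-unimodular copy of $X\subset\mathbb R^d$ is a set $T(X)$ for such a $T$. A convex set $K\subset\mathbb R^d$ is called $A$-$X$-free if the relative interior of $K$ contains no $A$-unimodular copy of $X$ (by convention the relative interior of a single point is that point). *)

theory Defs
  imports "HOL-Analysis.Analysis"
begin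

definition GL_int :: "(real^'d^'d) set" where
  "GL_int = {M. (\<forall>i j. M $ i $ j \<in> \<int>) \<and> invertible M \<and>
                (\<forall>i j. matrix_inv M $ i $ j \<in> \<int>)}"

definition unimodular_copy :: "real set \<Rightarrow> (real^'d) set \<Rightarrow> (real^'d) set \<Rightarrow> bool" where
  "unimodular_copy A X Y \<longleftrightarrow>
     (\<exists>M b. M \<in> GL_int \<and> (\<forall>i. b $ i \<in> A) \<and> Y = (\<lambda>x. M *v x + b) ` X)"

definition convex_body :: "(real^'d) set \<Rightarrow> bool" where
  "convex_body K \<longleftrightarrow> K \<noteq> {} \<and> compact K \<and> convex K"

text \<open>K is A-X-free: rel_interior K contains no A-unimodular copy of X.
  (Isabelle's rel_interior of a singleton is the singleton itself.)\<close>
definition X_free :: "real set \<Rightarrow> (real^'d) set \<Rightarrow> (real^'d) set \<Rightarrow> bool" where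
  "X_free A X K \<longleftrightarrow> convex K \<and> \<not> (\<exists>Y. unimodular_copy A X Y \<and> Y \<subseteq> rel_interior K)"

definition maximal_X_free_body :: "real set \<Rightarrow> (real^'d) set \<Rightarrow> (real^'d) set \<Rightarrow> bool" where
  "maximal_X_free_body A X K \<longleftrightarrow> convex_body K \<and> X_free A X K \<and>
     (\<forall>L. convex_body L \<and> X_free A X L \<and> K \<subseteq> L \<longrightarrow> L = K)"

end

theory Submission
  imports Defs
begin

lemma sep_nonint:
  fixes K :: "'a::euclidean_space set"
  assumes "convex K" "x \<notin> interior K"
  shows "\<exists>a. a \<noteq> 0 \<and> (\<forall>y\<in>K. a \<bullet> y \<le> a \<bullet> x)"
proof (cases "x \<in> closure K")
  case False
  obtain a b where ab: "inner a x < b" "\<forall>y\<in>closure K. inner a y > b"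
    using separating_hyperplane_closed_point[of "closure K" x] False assms(1)
    by (auto simp: convex_closure)
  show ?thesis
  proof (cases "a = 0")
    case True
    then have "closure K = {}" using ab by auto
    then have "K = {}" using closure_subset by blast
    then show ?thesis
      by (intro exI[of _ "SOME i. i \<in> Basis"]) (auto simp: SOME_Basis nonzero_Basis)
  next
    case False
    have "\<forall>y\<in>K. (-a) \<bullet> y \<le> (-a) \<bullet> x"
    proof
      fix y assume "y \<in> K"
      then have "y \<in> closure K" using closure_subset by blast
      then have "b < a \<bullet> y" using ab by blast
      then show "(-a) \<bullet> y \<le> (-a) \<bullet> x" using ab(1) by simp
    qed
    then show ?thesis using False by (intro exI[of _ "-a"]) simp
  qed
next
  case True
  show ?thesis
  proof (cases "interior K = {}")
    case True
    then obtain a b where ab: "a \<noteq> 0" "K \<subseteq> {x. a \<bullet> x = b}"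
      using empty_interior_subset_hyperplane assms(1) by blast
    show ?thesis
    proof (cases "b \<le> a \<bullet> x")
      case True then show ?thesis using ab by (intro exI[of _ a]) auto
    next
      case False then show ?thesis using ab by (intro exI[of _ "-a"]) auto
    qed
  next
    case False
    then have "aff_dim K = DIM('a)" by (rule aff_dim_nonempty_interior)
    then have "affine hull K = UNIV" by (simp add: aff_dim_eq_full)
    then have "rel_interior K = interior K" by (rule rel_interior_interior)
    then have "x \<notin> rel_interior K" using assms by simp
    then obtain a where a: "a \<noteq> 0" "\<And>y. y \<in> closure K \<Longrightarrow> a \<bullet> x \<le> a \<bullet> y"
      using supporting_hyperplane_relative_frontier[OF assms(1) True] by metis
    have "\<forall>y\<in>K. (-a) \<bullet> y \<le> (-a) \<bullet> x"
    proof
      fix y assume "y \<in> K"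
      then have "y \<in> closure K" using closure_subset by blast
      then show "(-a) \<bullet> y \<le> (-a) \<bullet> x" using a(2) by simp
    qed
    then show ?thesis using a(1) by (intro exI[of _ "-a"]) simp
  qed
qed

lemma fin_vec:
  assumes "finite F"
  shows "finite {x::'a^'n. \<forall>i. x$i \<in> F}"
proof -
  have "{x::'a^'n. \<forall>i. x$i \<in> F} \<subseteq> (\<lambda>f. vec_lambda f) ` (PiE UNIV (\<lambda>_. F))"
  proof
    fix x :: "'a^'n" assume "x \<in> {x. \<forall>i. x$i \<in> F}"
    then have "(\<lambda>i. x$i) \<in> PiE UNIV (\<lambda>_. F)" by auto
    then show "x \<in> (\<lambda>f. vec_lambda f) ` (PiE UNIV (\<lambda>_. F))"
      by (intro image_eqI[of _ _ "\<lambda>i. x$i"]) auto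
  qed
  then show ?thesis
    by (rule finite_subset) (intro finite_imageI finite_PiE assms, auto)
qed

lemma fin_mat:
  assumes "finite F"
  shows "finite {M::'a^'n^'m. \<forall>i j. M$i$j \<in> F}"
proof -
  have "{M::'a^'n^'m. \<forall>i j. M$i$j \<in> F} \<subseteq> {M. \<forall>i. M$i \<in> {x::'a^'n. \<forall>j. x$j \<in> F}}"
    by auto
  then show ?thesis using fin_vec[OF fin_vec[OF assms]] finite_subset by blast
qed

lemma fin_int: "finite {k::real. k \<in> \<int> \<and> \<bar>k\<bar> \<le> N}"
proof -
  have "{k::real. k \<in> \<int> \<and> \<bar>k\<bar> \<le> N} \<subseteq> of_int ` {-\<lceil>N\<rceil>..\<lceil>N\<rceil>}"
  proof
    fix k :: real assume "k \<in> {k. k \<in> \<int> \<and> \<bar>k\<bar> \<le> N}"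
    then obtain n where n: "k = of_int n" "\<bar>of_int n\<bar> \<le> N" by (auto elim: Ints_cases)
    then have "n \<in> {-\<lceil>N\<rceil>..\<lceil>N\<rceil>}" by (auto simp: abs_le_iff) linarith+
    then show "k \<in> of_int ` {-\<lceil>N\<rceil>..\<lceil>N\<rceil>}" using n by auto
  qed
  then show ?thesis using finite_subset by blast
qed


lemma transl_lemma:
  fixes K V :: "'a::euclidean_space set"
  assumes K: "compact K" "K \<noteq> {}" "convex K" and V: "finite V" "V \<noteq> {}"
    and free: "\<And>b. \<exists>v\<in>V. v + b \<notin> interior K"
  shows "\<exists>H. finite H \<and> (\<forall>p\<in>H. fst p \<noteq> 0 \<and> (\<forall>y\<in>K. fst p \<bullet> y \<le> snd p))
            \<and> (\<forall>b. \<exists>v\<in>V. \<exists>p\<in>H. snd p \<le> fst p \<bullet> (v + b))"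
proof -
  have "bounded (K \<union> V)" using K V by (simp add: compact_imp_bounded finite_imp_bounded)
  then obtain R where R: "\<And>z. z \<in> K \<union> V \<Longrightarrow> norm z \<le> R" by (auto simp: bounded_iff)
  have Rbd: "\<bar>a \<bullet> (y - v)\<bar> \<le> 2*R" if "norm a = 1" "y \<in> K" "v \<in> V" for a y v
  proof -
    have "\<bar>a \<bullet> (y - v)\<bar> \<le> norm a * norm (y - v)" by (rule Cauchy_Schwarz_ineq2)
    also have "\<dots> = norm (y - v)" using that by simp
    also have "\<dots> \<le> norm y + norm v" by (rule norm_triangle_ineq4)
    also have "\<dots> \<le> 2*R" using R[of y] R[of v] that by simp
    finally show ?thesis .
  qed
  define E where "E = {p::'a\<times>real. norm (fst p) = 1 \<and> snd p \<le> 2*R \<and>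
                        (\<forall>y\<in>K. \<exists>v\<in>V. fst p \<bullet> (y - v) \<le> snd p)}"
  have memE: "(a, min t (2*R)) \<in> E" if "norm a = 1" "\<forall>y\<in>K. \<exists>v\<in>V. a \<bullet> (y - v) \<le> t" for a t
  proof (cases "t \<le> 2*R")
    case True then show ?thesis using that by (simp add: E_def)
  next
    case False
    obtain v0 where "v0 \<in> V" using V by blast
    then have "\<forall>y\<in>K. \<exists>v\<in>V. a \<bullet> (y - v) \<le> 2*R" using Rbd[OF that(1)] by (meson abs_le_D1)
    then show ?thesis using False that by (simp add: E_def)
  qed
  have E_eq: "E = ({p. norm (fst p) = 1} \<inter> {p. snd p \<le> 2*R}) \<inter>
        (\<Inter>y\<in>K. \<Union>v\<in>V. {p. fst p \<bullet> (y - v) \<le> snd p})"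
    by (auto simp: E_def)
  have "closed E" unfolding E_eq
    by (intro closed_Int closed_INT ballI closed_UN V closed_Collect_le closed_Collect_eq
        continuous_intros)
  moreover have "E \<subseteq> sphere 0 1 \<times> {-2*R..2*R}"
  proof
    fix p assume p: "p \<in> E"
    obtain y0 where y0: "y0 \<in> K" using K by blast
    then obtain v where "v \<in> V" "fst p \<bullet> (y0 - v) \<le> snd p" using p by (auto simp: E_def)
    moreover have "\<bar>fst p \<bullet> (y0 - v)\<bar> \<le> 2*R" using Rbd p y0 \<open>v \<in> V\<close> by (auto simp: E_def)
    ultimately show "p \<in> sphere 0 1 \<times> {-2*R..2*R}" using p
      by (cases p) (auto simp: E_def)
  qed
  ultimately have cE: "compact E"
    by (metis compact_Int_closed compact_Times compact_sphere compact_Icc inf.absorb_iff2)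
  define Ray :: "('a\<times>real) set" where "Ray = {0} \<times> {0..}"
  define C where "C = (\<Union>x\<in>Ray. \<Union>y\<in>convex hull E. {x + y})"
  have "closed Ray" unfolding Ray_def by (intro closed_Times) auto
  then have "closed C" unfolding C_def
    by (intro closed_compact_sums compact_convex_hull cE)
  have "convex Ray" unfolding Ray_def by (intro convex_Times) auto
  then have "convex C" unfolding C_def by (rule convex_sums[OF _ convex_convex_hull])
  have mem: "(a, t + r) \<in> C" if "(a,t) \<in> E" "r \<ge> 0" for a t r
  proof -
    have "(a,t) \<in> convex hull E" by (rule hull_inc) (rule that(1))
    moreover have "(0, r) \<in> Ray" using that by (simp add: Ray_def)
    moreover have "(a, t + r) = (0, r) + (a, t)" by simp
    ultimately show ?thesis unfolding C_def
      by (intro UN_I[of "(0,r)"] UN_I[of "(a,t)"]) auto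
  qed
  obtain a0 :: 'a where a0: "norm a0 = 1" using norm_Basis[OF SOME_Basis] by blast
  have "0 \<in> C"
  proof (rule ccontr)
    assume "0 \<notin> C"
    then obtain w \<beta> where w: "w \<noteq> 0" "0 < \<beta>" "\<forall>x\<in>C. inner w x > \<beta>"
      using separating_hyperplane_closed_0[OF \<open>convex C\<close> \<open>closed C\<close>] by blast
    define u where "u = fst w"
    define s where "s = snd w"
    have key: "\<beta> < u \<bullet> a + s * (t + r)" if "(a,t) \<in> E" "r \<ge> 0" for a t r
    proof -
      have "\<beta> < w \<bullet> (a, t + r)" using w(3) mem[OF that] by blast
      moreover have "w \<bullet> (a, t+r) = u \<bullet> a + s*(t+r)" by (cases w) (simp add: u_def s_def)
      ultimately show ?thesis by simp
    qed
    have allR: "\<forall>y\<in>K. \<exists>v\<in>V. a \<bullet> (y - v) \<le> 2*R" if "norm a = 1" for a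
      using Rbd[OF that] V by (meson abs_le_D1 ex_in_conv)
    have E2R: "(a, 2*R) \<in> E" if "norm a = 1" for a
      using memE[OF that allR[OF that]] by simp
    consider "s < 0" | "s = 0" | "s > 0" by linarith
    then show False
    proof cases
      case 1
      define c where "c = u \<bullet> a0 + s * (2*R)"
      have r0: "0 \<le> \<bar>c\<bar> / (-s)" using 1 by (intro divide_nonneg_pos) auto
      have sc: "s * (\<bar>c\<bar> / (-s)) = - \<bar>c\<bar>" using 1 by (simp add: field_simps)
      have "\<beta> < u \<bullet> a0 + s * (2*R + \<bar>c\<bar> / (-s))"
        using key[OF E2R[OF a0] r0] .
      also have "\<dots> = c - \<bar>c\<bar>" using sc by (simp add: c_def algebra_simps)
      finally show False using w(2) by simp
    next
      case 2
      then have "u \<noteq> 0" using w(1) by (cases w) (simp add: u_def s_def zero_prod_def)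
      then have nu: "norm u > 0" by simp
      define a where "a = (-1 / norm u) *\<^sub>R u"
      have na: "norm a = 1" using nu by (simp add: a_def)
      have ua: "u \<bullet> a = (-1 / norm u) * (norm u)^2" by (simp add: a_def power2_norm_eq_inner)
      have "\<beta> < u \<bullet> a + s * (2*R + 0)" using key[OF E2R[OF na], of 0] by simp
      also have "\<dots> = - norm u" using 2 nu ua by (simp add: power2_eq_square)
      finally show False using w(2) nu by simp
    next
      case 3
      define b' where "b' = (-1 / s) *\<^sub>R u"
      obtain v where v: "v \<in> V" "v + b' \<notin> interior K" using free by blast
      obtain a1 where a1: "a1 \<noteq> 0" "\<forall>y\<in>K. a1 \<bullet> y \<le> a1 \<bullet> (v + b')"
        using sep_nonint[OF K(3) v(2)] by blast
      have na1: "norm a1 > 0" using a1 by simp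
      define a where "a = (1 / norm a1) *\<^sub>R a1"
      have na: "norm a = 1" using na1 by (simp add: a_def)
      have ineq: "a \<bullet> (y - v) \<le> a \<bullet> b'" if "y \<in> K" for y
      proof -
        have "a1 \<bullet> y \<le> a1 \<bullet> (v + b')" using a1(2) that by blast
        then have "(1 / norm a1) * (a1 \<bullet> y) \<le> (1 / norm a1) * (a1 \<bullet> (v + b'))"
          using na1 by (intro mult_left_mono) auto
        then have "a \<bullet> y \<le> a \<bullet> (v + b')" by (simp add: a_def)
        then show ?thesis by (simp add: inner_diff_right inner_add_right)
      qed
      have "\<forall>y\<in>K. \<exists>v\<in>V. a \<bullet> (y - v) \<le> a \<bullet> b'"
        using ineq v(1) by blast
      from memE[OF na this] have "(a, min (a \<bullet> b') (2*R)) \<in> E" .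
      from key[OF this, of 0]
      have "\<beta> < u \<bullet> a + s * min (a \<bullet> b') (2*R)" by simp
      also have "\<dots> \<le> u \<bullet> a + s * (a \<bullet> b')"
        using mult_left_mono[OF min.cobounded1, of s "a \<bullet> b'" "2*R"] 3 by simp
      also have "a \<bullet> b' = - (u \<bullet> a) / s" by (simp add: b'_def inner_commute)
      also have "u \<bullet> a + s * (- (u \<bullet> a) / s) = 0" using 3 by simp
      finally show False using w(2) by simp
    qed
  qed
  then obtain x y where xy: "x \<in> Ray" "y \<in> convex hull E" "0 = x + y" unfolding C_def by blast
  then obtain r where r: "x = (0, r)" "r \<ge> 0" unfolding Ray_def by auto
  have "y = - x" using minus_unique[of x y] xy(3) by simp
  then have y: "fst y = 0" "snd y = -r" using r(1) by auto
  obtain S u where S: "finite S" "S \<subseteq> E" "\<forall>x\<in>S. 0 \<le> u x" "sum u S = 1"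
      "(\<Sum>v\<in>S. u v *\<^sub>R v) = y"
    using xy(2) unfolding convex_hull_explicit by blast
  have "fst (\<Sum>v\<in>S. u v *\<^sub>R v) = 0" using S(5) y by simp
  then have sumfst: "(\<Sum>p\<in>S. u p *\<^sub>R fst p) = 0" by (simp add: fst_sum)
  have "snd (\<Sum>v\<in>S. u v *\<^sub>R v) = -r" using S(5) y by simp
  then have sumsnd: "(\<Sum>p\<in>S. u p * snd p) \<le> 0" using r(2) by (simp add: snd_sum)
  have exz: "\<forall>p::'a\<times>real. \<exists>z. z \<in> K \<and> (\<forall>z'\<in>K. fst p \<bullet> z' \<le> fst p \<bullet> z)"
  proof
    fix p :: "'a \<times> real"
    have "\<exists>z\<in>K. \<forall>z'\<in>K. fst p \<bullet> z' \<le> fst p \<bullet> z"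
      by (rule continuous_attains_sup[OF K(1) K(2)]) (intro continuous_intros)
    then show "\<exists>z. z \<in> K \<and> (\<forall>z'\<in>K. fst p \<bullet> z' \<le> fst p \<bullet> z)" by blast
  qed
  obtain ym :: "'a\<times>real \<Rightarrow> 'a" where ym: "\<forall>p. ym p \<in> K \<and> (\<forall>z'\<in>K. fst p \<bullet> z' \<le> fst p \<bullet> ym p)"
    using choice[OF exz] by blast
  define H where "H = (\<lambda>p. (fst p, fst p \<bullet> ym p)) ` S"
  have "finite H" using S(1) by (simp add: H_def)
  moreover have "\<forall>p\<in>H. fst p \<noteq> 0 \<and> (\<forall>y\<in>K. fst p \<bullet> y \<le> snd p)"
  proof
    fix q assume "q \<in> H"
    then obtain p where p: "p \<in> S" "q = (fst p, fst p \<bullet> ym p)" by (auto simp: H_def)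
    then have "p \<in> E" using S(2) by blast
    then have "norm (fst p) = 1" by (simp add: E_def)
    moreover have "\<forall>y\<in>K. fst p \<bullet> y \<le> fst p \<bullet> ym p" using ym by blast
    ultimately show "fst q \<noteq> 0 \<and> (\<forall>y\<in>K. fst q \<bullet> y \<le> snd q)" using p(2) by auto
  qed
  moreover have "\<forall>b. \<exists>v\<in>V. \<exists>p\<in>H. snd p \<le> fst p \<bullet> (v + b)"
  proof (rule ccontr)
    assume "\<not> (\<forall>b. \<exists>v\<in>V. \<exists>p\<in>H. snd p \<le> fst p \<bullet> (v + b))"
    then obtain b where b: "\<And>v p. v \<in> V \<Longrightarrow> p \<in> H \<Longrightarrow> fst p \<bullet> (v + b) < snd p"
      by (meson not_le)
    have lt: "fst p \<bullet> b < snd p" if "p \<in> S" for p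
    proof -
      have "p \<in> E" using S(2) that by blast
      then have "\<forall>y\<in>K. \<exists>v\<in>V. fst p \<bullet> (y - v) \<le> snd p" by (simp add: E_def)
      moreover have "ym p \<in> K" using ym by blast
      ultimately obtain v where v: "v \<in> V" "fst p \<bullet> (ym p - v) \<le> snd p" by blast
      have "(fst p, fst p \<bullet> ym p) \<in> H" using that by (simp add: H_def)
      from b[OF v(1) this] have "fst p \<bullet> (v + b) < fst p \<bullet> ym p" by simp
      then show ?thesis using v(2) by (simp add: inner_add_right inner_diff_right)
    qed
    have "\<exists>p\<in>S. u p > 0"
    proof (rule ccontr)
      assume "\<not> (\<exists>p\<in>S. u p > 0)"
      then have "\<forall>p\<in>S. u p = 0" using S(3) by force
      then show False using S(4) by simp
    qed
    then obtain p0 where p0: "p0 \<in> S" "u p0 > 0" by blast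
    have "(\<Sum>p\<in>S. u p * (fst p \<bullet> b)) < (\<Sum>p\<in>S. u p * snd p)"
    proof (rule sum_strict_mono_ex1[OF S(1)])
      show "\<forall>x\<in>S. u x * (fst x \<bullet> b) \<le> u x * snd x"
        using lt S(3) by (simp add: mult_left_mono less_imp_le)
      show "\<exists>a\<in>S. u a * (fst a \<bullet> b) < u a * snd a"
        using lt[OF p0(1)] p0 by (intro bexI[OF _ p0(1)]) simp
    qed
    moreover have "(\<Sum>p\<in>S. u p * (fst p \<bullet> b)) = (\<Sum>p\<in>S. u p *\<^sub>R fst p) \<bullet> b"
      by (simp add: inner_sum_left)
    ultimately show False using sumfst sumsnd by simp
  qed
  ultimately show ?thesis by blast
qed


lemma copy_hull:
  fixes M :: "real^'d^'d"
  shows "(\<lambda>x. M *v x + b) ` (convex hull S) = convex hull ((\<lambda>x. M *v x + b) ` S)"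
proof -
  have "(\<lambda>x. M *v x + b) ` (convex hull S) = (\<lambda>x. b + x) ` ((\<lambda>x. M *v x) ` (convex hull S))"
    by (simp add: image_image add.commute)
  also have "(\<lambda>x. M *v x) ` (convex hull S) = convex hull ((\<lambda>x. M *v x) ` S)"
    by (rule convex_hull_linear_image) (rule matrix_vector_mul_linear)
  also have "(\<lambda>x. b + x) ` (convex hull ((\<lambda>x. M *v x) ` S)) = convex hull ((\<lambda>x. b + x) ` ((\<lambda>x. M *v x) ` S))"
    by (rule convex_hull_translation[symmetric])
  also have "(\<lambda>x. b + x) ` ((\<lambda>x. M *v x) ` S) = (\<lambda>x. M *v x + b) ` S"
    by (simp add: image_image add.commute)
  finally show ?thesis .
qed

lemma aff_dim_copy:
  fixes M :: "real^'d^'d"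
  assumes "M \<in> GL_int"
  shows "aff_dim ((\<lambda>x. M *v x + b) ` X) = aff_dim X"
proof -
  have inv: "invertible M" using assms by (simp add: GL_int_def)
  have "(\<lambda>x. M *v x + b) ` X = (+) b ` ((\<lambda>x. M *v x) ` X)"
    by (simp add: image_image add.commute)
  then have "aff_dim ((\<lambda>x. M *v x + b) ` X) = aff_dim ((\<lambda>x. M *v x) ` X)"
    by (simp add: aff_dim_translation_eq)
  also have "\<dots> = aff_dim X"
    using inj_matrix_vector_mult[OF inv] by (intro aff_dim_injective_linear_image) auto
  finally show ?thesis .
qed

lemma final_step:
  fixes K P X :: "(real^'d) set" and H :: "((real^'d) \<times> real) set"
  assumes maxK: "\<And>L. convex_body L \<Longrightarrow> X_free A X L \<Longrightarrow> K \<subseteq> L \<Longrightarrow> L = K"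
    and KP: "K \<subseteq> P" and P: "polyhedron P" "bounded P"
    and Xd: "aff_dim X = int CARD('d)"
    and H: "finite H" "\<forall>p\<in>H. fst p \<noteq> 0 \<and> (\<forall>y\<in>K. fst p \<bullet> y \<le> snd p)"
    and cov: "\<And>M b. M \<in> GL_int \<Longrightarrow> (\<forall>i. b$i \<in> A) \<Longrightarrow> (\<lambda>x. M *v x + b) ` X \<subseteq> P \<Longrightarrow>
                (\<exists>y\<in>(\<lambda>x. M *v x + b) ` X. \<exists>p\<in>H. snd p \<le> fst p \<bullet> y)"
    and Kne: "K \<noteq> {}"
  shows "polytope K"
proof -
  define L where "L = P \<inter> \<Inter>((\<lambda>p. {x. fst p \<bullet> x \<le> snd p}) ` H)"
  have "polyhedron L" unfolding L_def
    using H(1) by (intro polyhedron_Int P(1) polyhedron_Inter) (auto simp: polyhedron_halfspace_le)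
  moreover have "bounded L" unfolding L_def using P(2) by (rule bounded_subset) auto
  ultimately have pL: "polytope L" by (simp add: polytope_eq_bounded_polyhedron)
  have KL: "K \<subseteq> L" unfolding L_def using KP H(2) by auto
  have "convex_body L" unfolding convex_body_def
    using pL KL Kne polytope_imp_compact polytope_imp_convex by blast
  moreover have "X_free A X L"
    unfolding X_free_def
  proof (intro conjI notI)
    show "convex L" using pL polytope_imp_convex by blast
    assume "\<exists>Y. unimodular_copy A X Y \<and> Y \<subseteq> rel_interior L"
    then obtain M b where Mb: "M \<in> GL_int" "\<forall>i. b$i \<in> A"
      and sub: "(\<lambda>x. M *v x + b) ` X \<subseteq> rel_interior L"
      unfolding unimodular_copy_def by blast
    have YL: "(\<lambda>x. M *v x + b) ` X \<subseteq> L" using sub rel_interior_subset by blast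
    then have "(\<lambda>x. M *v x + b) ` X \<subseteq> P" unfolding L_def by blast
    from cov[OF Mb this] obtain y p where yp: "y \<in> (\<lambda>x. M *v x + b) ` X" "p \<in> H"
      "snd p \<le> fst p \<bullet> y" by blast
    have "aff_dim ((\<lambda>x. M *v x + b) ` X) \<le> aff_dim L" using YL by (rule aff_dim_subset)
    then have "aff_dim L \<ge> int CARD('d)" using aff_dim_copy[OF Mb(1)] Xd by simp
    moreover have "aff_dim L \<le> int CARD('d)" using aff_dim_le_DIM[of L] by simp
    ultimately have "aff_dim L = int DIM(real^'d)" by simp
    then have "affine hull L = UNIV" by (simp only: aff_dim_eq_full)
    then have "rel_interior L = interior L" by (rule rel_interior_interior)
    then have "y \<in> interior L" using sub yp(1) by blast
    moreover have "L \<subseteq> {x. fst p \<bullet> x \<le> snd p}" unfolding L_def using yp(2) by blast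
    ultimately have "y \<in> interior {x. fst p \<bullet> x \<le> snd p}" using interior_mono by blast
    then have "fst p \<bullet> y < snd p" using H(2) yp(2) by simp
    then show False using yp(3) by simp
  qed
  ultimately have "L = K" using maxK KL by blast
  then show ?thesis using pL by simp
qed


theorem theorem1p2:
  fixes A :: "real set" and X K :: "(real^'d) set"
  assumes "A = \<int> \<or> A = UNIV"
    and "polytope X" and "aff_dim X = int CARD('d)"
    and "maximal_X_free_body A X K"
  shows "polytope K"
proof -
  have Kb: "convex_body K" and Kfree: "X_free A X K"
    and maxK: "\<And>L. convex_body L \<Longrightarrow> X_free A X L \<Longrightarrow> K \<subseteq> L \<Longrightarrow> L = K"
    using assms(4) unfolding maximal_X_free_body_def by auto
  have K: "compact K" "K \<noteq> {}" "convex K" using Kb by (auto simp: convex_body_def)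
  have noY: "\<not> ((\<lambda>x. M *v x + b) ` X \<subseteq> interior K)"
    if "M \<in> GL_int" "\<forall>i. b$i \<in> A" for M b
  proof
    assume "(\<lambda>x. M *v x + b) ` X \<subseteq> interior K"
    then have "(\<lambda>x. M *v x + b) ` X \<subseteq> rel_interior K"
      using interior_subset_rel_interior by blast
    moreover have "unimodular_copy A X ((\<lambda>x. M *v x + b) ` X)"
      unfolding unimodular_copy_def using that by blast
    ultimately show False using Kfree unfolding X_free_def by blast
  qed
  obtain S where S: "finite S" "X = convex hull S" using assms(2) unfolding polytope_def by blast
  have "X \<noteq> {}" using assms(3) by auto
  then have "S \<noteq> {}" using S by auto
  have "aff_dim X = int DIM(real^'d)" using assms(3) by simp
  then have "affine hull X = UNIV" by (simp only: aff_dim_eq_full)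
  then have "rel_interior X = interior X" by (rule rel_interior_interior)
  moreover have "rel_interior X \<noteq> {}"
    using \<open>X \<noteq> {}\<close> S(2) by (simp add: rel_interior_eq_empty)
  ultimately obtain c where "c \<in> interior X" by blast
  then obtain r where r: "r > 0" "ball c r \<subseteq> X" using open_interior open_contains_ball
    by (metis interior_subset subset_trans)
  have cX: "c \<in> X" using r by auto
  obtain a where "K \<subseteq> cbox (-a) a"
    using bounded_subset_cbox_symmetric[OF compact_imp_bounded[OF K(1)]] by blast
  define P where "P = cbox (-a) a"
  have P: "polyhedron P" "bounded P" "K \<subseteq> P" using \<open>K \<subseteq> cbox (-a) a\<close> by (auto simp: P_def)
  obtain B where B: "\<And>x. x \<in> P \<Longrightarrow> norm x \<le> B" using P(2) by (auto simp: bounded_iff)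
  define FM where "FM = {M. M \<in> GL_int \<and> (\<exists>b. (\<lambda>x. M *v x + b) ` X \<subseteq> P)}"
  have "FM \<subseteq> {M. \<forall>i j. M$i$j \<in> {k. k \<in> \<int> \<and> \<bar>k\<bar> \<le> 4*B/r}}"
  proof (intro subsetI CollectI allI)
    fix M i j assume "M \<in> FM"
    then obtain b where M: "M \<in> GL_int" "(\<lambda>x. M *v x + b) ` X \<subseteq> P" by (auto simp: FM_def)
    have "M$i$j \<in> \<int>" using M(1) by (simp add: GL_int_def)
    define e :: "real^'d" where "e = axis j 1"
    have "c + (r/2) *\<^sub>R e \<in> ball c r" using r(1) by (simp add: e_def dist_norm)
    then have "c + (r/2) *\<^sub>R e \<in> X" using r(2) by blast
    then have p2: "M *v (c + (r/2) *\<^sub>R e) + b \<in> P" using M(2) by blast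
    have p1: "M *v c + b \<in> P" using M(2) cX by blast
    have "norm ((M *v (c + (r/2) *\<^sub>R e) + b) - (M *v c + b)) \<le> norm (M *v (c + (r/2) *\<^sub>R e) + b) + norm (M *v c + b)"
      by (rule norm_triangle_ineq4)
    also have "\<dots> \<le> 2*B" using B[OF p1] B[OF p2] by simp
    finally have n1: "norm ((r/2) *\<^sub>R (M *v e)) \<le> 2*B"
      by (simp add: matrix_vector_right_distrib matrix_vector_mult_scaleR)
    have ce: "(M *v e)$i = M$i$j" by (simp add: e_def matrix_vector_mult_basis column_def)
    have c1: "\<bar>M$i$j\<bar> \<le> norm (M *v e)" using component_le_norm_cart[of "M *v e" i] ce by simp
    have c2: "(r/2) * norm (M *v e) \<le> 2*B" using n1 r(1) by simp
    have "(r/2) * \<bar>M$i$j\<bar> \<le> (r/2) * norm (M *v e)" using c1 r(1) by (intro mult_left_mono) auto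
    then have "(r/2) * \<bar>M$i$j\<bar> \<le> 2*B" using c2 by linarith
    then have "\<bar>M$i$j\<bar> \<le> 4*B/r" using r(1) by (simp add: field_simps)
    then show "M$i$j \<in> \<int> \<and> \<bar>M$i$j\<bar> \<le> 4*B/r" using \<open>M$i$j \<in> \<int>\<close> by simp
  qed
  then have finFM: "finite FM" using fin_mat[OF fin_int] finite_subset by blast
  show ?thesis
  proof (cases "A = UNIV")
    case True
    have tr: "\<exists>H. finite H \<and> (\<forall>p\<in>H. fst p \<noteq> 0 \<and> (\<forall>y\<in>K. fst p \<bullet> y \<le> snd p))
            \<and> (\<forall>b. \<exists>v\<in>(\<lambda>x. M *v x) ` S. \<exists>p\<in>H. snd p \<le> fst p \<bullet> (v + b))"
      if "M \<in> FM" for M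
    proof (rule transl_lemma[OF K])
      show "finite ((\<lambda>x. M *v x) ` S)" using S(1) by simp
      show "(\<lambda>x. M *v x) ` S \<noteq> {}" using \<open>S \<noteq> {}\<close> by simp
      fix b
      show "\<exists>v\<in>(\<lambda>x. M *v x) ` S. v + b \<notin> interior K"
      proof (rule ccontr)
        assume "\<not> (\<exists>v\<in>(\<lambda>x. M *v x) ` S. v + b \<notin> interior K)"
        then have "(\<lambda>x. M *v x + b) ` S \<subseteq> interior K" by auto
        then have "convex hull ((\<lambda>x. M *v x + b) ` S) \<subseteq> interior K"
          by (intro hull_minimal) (auto simp: convex_interior K(3))
        then have "(\<lambda>x. M *v x + b) ` X \<subseteq> interior K" using S(2) copy_hull by metis
        moreover have "M \<in> GL_int" using that by (simp add: FM_def)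
        ultimately show False using noY True by blast
      qed
    qed
    then obtain HM where HM: "\<And>M. M \<in> FM \<Longrightarrow> finite (HM M) \<and> (\<forall>p\<in>HM M. fst p \<noteq> 0 \<and> (\<forall>y\<in>K. fst p \<bullet> y \<le> snd p))
            \<and> (\<forall>b. \<exists>v\<in>(\<lambda>x. M *v x) ` S. \<exists>p\<in>HM M. snd p \<le> fst p \<bullet> (v + b))"
      by metis
    show ?thesis
    proof (rule final_step[OF maxK P(3) P(1) P(2) assms(3)])
      show "finite (\<Union>M\<in>FM. HM M)" using finFM HM by (simp add: finite_UN)
      show "\<forall>p\<in>(\<Union>M\<in>FM. HM M). fst p \<noteq> 0 \<and> (\<forall>y\<in>K. fst p \<bullet> y \<le> snd p)"
      proof
        fix p assume "p \<in> (\<Union>M\<in>FM. HM M)"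
        then obtain M where "M \<in> FM" "p \<in> HM M" by blast
        then show "fst p \<noteq> 0 \<and> (\<forall>y\<in>K. fst p \<bullet> y \<le> snd p)" using HM[OF \<open>M \<in> FM\<close>] by blast
      qed
      show "K \<noteq> {}" by (rule K(2))
      fix M b assume Mb: "M \<in> GL_int" "\<forall>i. b$i \<in> A" "(\<lambda>x. M *v x + b) ` X \<subseteq> P"
      then have "M \<in> FM" by (auto simp: FM_def)
      then obtain v p where vp: "v \<in> (\<lambda>x. M *v x) ` S" "p \<in> HM M" "snd p \<le> fst p \<bullet> (v + b)"
        using HM[OF \<open>M \<in> FM\<close>] by blast
      then obtain s where s: "s \<in> S" "v = M *v s" by blast
      have "s \<in> convex hull S" by (rule hull_inc[OF s(1)])
      then have "s \<in> X" using S(2) by simp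
      then have "v + b \<in> (\<lambda>x. M *v x + b) ` X" using s(2) by (intro image_eqI[of _ _ s]) auto
      then show "\<exists>y\<in>(\<lambda>x. M *v x + b) ` X. \<exists>p\<in>\<Union>M\<in>FM. HM M. snd p \<le> fst p \<bullet> y"
        using vp(2,3) \<open>M \<in> FM\<close> by blast
    qed
  next
    case False
    then have AZ: "A = \<int>" using assms(1) by blast
    define CS where "CS = {(M,b). M \<in> GL_int \<and> (\<forall>i. b$i \<in> \<int>) \<and> (\<lambda>x. M *v x + b) ` X \<subseteq> P}"
    have "CS \<subseteq> Sigma FM (\<lambda>M. {b::real^'d. \<forall>i. b$i \<in> {k. k \<in> \<int> \<and> \<bar>k\<bar> \<le> B + norm (M *v c)}})"
    proof
      fix q assume "q \<in> CS"
      then obtain M b where q: "q = (M,b)" "M \<in> GL_int" "\<forall>i. b$i \<in> \<int>"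
        "(\<lambda>x. M *v x + b) ` X \<subseteq> P" by (auto simp: CS_def)
      then have "M \<in> FM" by (auto simp: FM_def)
      have "M *v c + b \<in> P" using q(4) cX by blast
      then have nb: "norm (M *v c + b) \<le> B" by (rule B)
      have "\<bar>b$i\<bar> \<le> B + norm (M *v c)" for i
      proof -
        have "\<bar>b$i\<bar> \<le> norm b" by (rule component_le_norm_cart)
        also have "norm b = norm ((M *v c + b) - M *v c)" by simp
        also have "\<dots> \<le> norm (M *v c + b) + norm (M *v c)" by (rule norm_triangle_ineq4)
        finally show ?thesis using nb by simp
      qed
      then show "q \<in> Sigma FM (\<lambda>M. {b::real^'d. \<forall>i. b$i \<in> {k. k \<in> \<int> \<and> \<bar>k\<bar> \<le> B + norm (M *v c)}})"
        using q \<open>M \<in> FM\<close> by auto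
    qed
    moreover have "finite (Sigma FM (\<lambda>M. {b::real^'d. \<forall>i. b$i \<in> {k. k \<in> \<int> \<and> \<bar>k\<bar> \<le> B + norm (M *v c)}}))"
      using finFM by (intro finite_SigmaI fin_vec fin_int)
    ultimately have finCS: "finite CS" by (rule finite_subset)
    have ex: "\<exists>p. fst p \<noteq> 0 \<and> (\<forall>y\<in>K. fst p \<bullet> y \<le> snd p) \<and>
                 (\<exists>y\<in>(\<lambda>x. fst q *v x + snd q) ` X. snd p \<le> fst p \<bullet> y)" if "q \<in> CS" for q
    proof -
      obtain M b where q: "q = (M,b)" "M \<in> GL_int" "\<forall>i. b$i \<in> \<int>"
        using \<open>q \<in> CS\<close> by (auto simp: CS_def)
      then obtain y where y: "y \<in> (\<lambda>x. M *v x + b) ` X" "y \<notin> interior K"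
        using noY[of M b] AZ by blast
      obtain a1 where a1: "a1 \<noteq> 0" "\<forall>z\<in>K. a1 \<bullet> z \<le> a1 \<bullet> y"
        using sep_nonint[OF K(3) y(2)] by blast
      show ?thesis using a1 y(1) q(1) by (intro exI[of _ "(a1, a1 \<bullet> y)"]) auto
    qed
    then obtain hh where hh: "\<And>q. q \<in> CS \<Longrightarrow> fst (hh q) \<noteq> 0 \<and> (\<forall>y\<in>K. fst (hh q) \<bullet> y \<le> snd (hh q)) \<and>
                 (\<exists>y\<in>(\<lambda>x. fst q *v x + snd q) ` X. snd (hh q) \<le> fst (hh q) \<bullet> y)"
      by metis
    show ?thesis
    proof (rule final_step[OF maxK P(3) P(1) P(2) assms(3)])
      show "finite (hh ` CS)" using finCS by simp
      show "\<forall>p\<in>hh ` CS. fst p \<noteq> 0 \<and> (\<forall>y\<in>K. fst p \<bullet> y \<le> snd p)" using hh by blast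
      show "K \<noteq> {}" by (rule K(2))
      fix M b assume Mb: "M \<in> GL_int" "\<forall>i. b$i \<in> A" "(\<lambda>x. M *v x + b) ` X \<subseteq> P"
      then have "(M,b) \<in> CS" using AZ by (auto simp: CS_def)
      from hh[OF this] show "\<exists>y\<in>(\<lambda>x. M *v x + b) ` X. \<exists>p\<in>hh ` CS. snd p \<le> fst p \<bullet> y"
        using \<open>(M,b) \<in> CS\<close> by auto
    qed
  qed
qed

end
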